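(* Let $(f,t)$ be a tax-based mechanism (with $n\ge 2$ players), where each type set $\Theta_i$ is a compact subset of some $\mathbb{R}^k$ and each $t_i$ is continuous. Define $T(\theta):=\sum_{i=1}^n t_i(\theta)$, $S_i^{BCGC}(\theta_{-i}):=\max_{\theta_i'\in\Theta_i} T(\theta_i',\theta_{-i})$, and $t_i^{BCGC}(\theta):=t_i(\theta)-S_i^{BCGC}(\theta_{-i})/n$. Then: (i) the mechanism $(f,t^{BCGC})$ is feasible; (ii) if $(f,t)$ is feasible, then either $t^{BCGC}=t$ or $(f,t^{BCGC})$ dominates $(f,t)$.
   Context: Setting: a set of decisions $D$, players $1,\dots,n$ ($n\ge2$), type sets $\Theta_i$, $\Theta:=\Theta_1\times\cdots\times\Theta_n$, and initial utility functions $v_i:D\times\Theta_i\to\mathbb{R}$. A tax-based mechanism is a pair $(f,t)$ with $f:\Theta\to D$ and $t=(t_1,\dots,t_n):\Theta\to\mathbb{R}^n$; player $i$'s final utility when reports are $\theta'$ and true type is $\theta_i$ is $v_i(f(\theta'),\theta_i)+t_i(\theta')$ (so $t_i>0$ means $i$ receives money). The mechanism is feasible if $\sum_i t_i(\theta)\le 0$ for all $\theta\in\Theta$. For two mechanisms with the same decision function, $t'$ dominates $t$ if $t_i(\theta)\le t'_i(\theta)$ for all $\theta$ and all $i$, with strict inequality for some $\theta$ and some $i$. *)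

theory Defs
  imports "HOL-Analysis.Analysis"
begin

text \<open>A mechanism is a pair (f, t) with f the decision function and t i the tax of player i.\<close>

definition profiles :: "nat \<Rightarrow> (nat \<Rightarrow> 'a set) \<Rightarrow> (nat \<Rightarrow> 'a) set" where
  "profiles n Thetas = PiE {..<n} Thetas"

definition feasible ::
  "nat \<Rightarrow> (nat \<Rightarrow> 'a set) \<Rightarrow> ((nat \<Rightarrow> 'a) \<Rightarrow> 'd) \<times> (nat \<Rightarrow> (nat \<Rightarrow> 'a) \<Rightarrow> real) \<Rightarrow> bool" where
  "feasible n Thetas m = (\<forall>\<theta>\<in>profiles n Thetas. (\<Sum>i<n. snd m i \<theta>) \<le> 0)"

definition dominates ::
  "nat \<Rightarrow> (nat \<Rightarrow> 'a set) \<Rightarrow> ((nat \<Rightarrow> 'a) \<Rightarrow> 'd) \<times> (nat \<Rightarrow> (nat \<Rightarrow> 'a) \<Rightarrow> real)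
     \<Rightarrow> ((nat \<Rightarrow> 'a) \<Rightarrow> 'd) \<times> (nat \<Rightarrow> (nat \<Rightarrow> 'a) \<Rightarrow> real) \<Rightarrow> bool" where
  "dominates n Thetas m' m =
     (fst m' = fst m \<and>
      (\<forall>\<theta>\<in>profiles n Thetas. \<forall>i<n. snd m i \<theta> \<le> snd m' i \<theta>) \<and>
      (\<exists>\<theta>\<in>profiles n Thetas. \<exists>i<n. snd m i \<theta> < snd m' i \<theta>))"

definition total_tax :: "nat \<Rightarrow> (nat \<Rightarrow> (nat \<Rightarrow> 'a) \<Rightarrow> real) \<Rightarrow> (nat \<Rightarrow> 'a) \<Rightarrow> real" where
  "total_tax n t \<theta> = (\<Sum>i<n. t i \<theta>)"

text \<open>S_i(theta_{-i}) = max over theta_i' in Theta_i of T(theta_i', theta_{-i});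
  the maximum exists by compactness/continuity, so it is written as a supremum.\<close>
definition S_BCGC ::
  "nat \<Rightarrow> (nat \<Rightarrow> 'a set) \<Rightarrow> (nat \<Rightarrow> (nat \<Rightarrow> 'a) \<Rightarrow> real) \<Rightarrow> nat \<Rightarrow> (nat \<Rightarrow> 'a) \<Rightarrow> real" where
  "S_BCGC n Thetas t i \<theta> = (SUP x\<in>Thetas i. total_tax n t (\<theta>(i := x)))"

definition t_BCGC ::
  "nat \<Rightarrow> (nat \<Rightarrow> 'a set) \<Rightarrow> (nat \<Rightarrow> (nat \<Rightarrow> 'a) \<Rightarrow> real) \<Rightarrow> nat \<Rightarrow> (nat \<Rightarrow> 'a) \<Rightarrow> real" where
  "t_BCGC n Thetas t i \<theta> = t i \<theta> - S_BCGC n Thetas t i \<theta> / real n"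

end

theory Submission
  imports Defs
begin

lemma upd_cont: "continuous_on S (\<lambda>x::'a::topological_space. (\<theta>::nat \<Rightarrow> 'a)(i := x))"
proof (rule continuous_on_coordinatewise_then_product)
  fix j show "continuous_on S (\<lambda>x. (\<theta>(i := x)) j)"
    by (cases "j = i") (auto intro: continuous_intros)
qed

lemma upd_prof: "\<theta> \<in> profiles n Th \<Longrightarrow> i < n \<Longrightarrow> x \<in> Th i \<Longrightarrow> \<theta>(i := x) \<in> profiles n Th"
  unfolding profiles_def by (auto simp: PiE_iff extensional_def)

theorem mainTheorem1:
  fixes n :: nat
    and Thetas :: "nat \<Rightarrow> 'a::euclidean_space set"
    and f :: "(nat \<Rightarrow> 'a) \<Rightarrow> 'd"
    and t :: "nat \<Rightarrow> (nat \<Rightarrow> 'a) \<Rightarrow> real"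
  assumes "n \<ge> 2"
    and "\<forall>i<n. compact (Thetas i)"
    and "\<forall>i<n. continuous_on (profiles n Thetas) (t i)"
  shows "feasible n Thetas (f, t_BCGC n Thetas t) \<and>
         (feasible n Thetas (f, t) \<longrightarrow>
           (\<forall>\<theta>\<in>profiles n Thetas. \<forall>i<n. t_BCGC n Thetas t i \<theta> = t i \<theta>)
           \<or> dominates n Thetas (f, t_BCGC n Thetas t) (f, t))"
proof -
  have bdd: "bdd_above ((\<lambda>x. total_tax n t (\<theta>(i := x))) ` Thetas i)"
    if th: "\<theta> \<in> profiles n Thetas" and i: "i < n" for \<theta> i
  proof -
    have c1: "continuous_on (Thetas i) (\<lambda>x. \<theta>(i := x))" by (rule upd_cont)
    have sub: "(\<lambda>x. \<theta>(i := x)) ` Thetas i \<subseteq> profiles n Thetas"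
      using upd_prof[OF th i] by auto
    have "continuous_on (Thetas i) (\<lambda>x. t k (\<theta>(i := x)))" if "k < n" for k
      using continuous_on_compose2[OF assms(3)[rule_format, OF that] c1 sub] .
    hence "continuous_on (Thetas i) (\<lambda>x. total_tax n t (\<theta>(i := x)))"
      unfolding total_tax_def by (intro continuous_on_sum) auto
    hence "compact ((\<lambda>x. total_tax n t (\<theta>(i := x))) ` Thetas i)"
      using assms(2) i by (intro compact_continuous_image) auto
    thus ?thesis by (intro bounded_imp_bdd_above compact_imp_bounded)
  qed
  have Sge: "total_tax n t \<theta> \<le> S_BCGC n Thetas t i \<theta>"
    if th: "\<theta> \<in> profiles n Thetas" and i: "i < n" for \<theta> i
  proof -
    have "\<theta> i \<in> Thetas i" using th i unfolding profiles_def by auto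
    hence "total_tax n t (\<theta>(i := \<theta> i)) \<le> S_BCGC n Thetas t i \<theta>"
      unfolding S_BCGC_def by (intro cSUP_upper bdd[OF th i])
    thus ?thesis by simp
  qed
  have feas: "feasible n Thetas (f, t_BCGC n Thetas t)"
    unfolding feasible_def
  proof
    fix \<theta> assume th: "\<theta> \<in> profiles n Thetas"
    have "(\<Sum>i<n. t_BCGC n Thetas t i \<theta>) = total_tax n t \<theta> - (\<Sum>i<n. S_BCGC n Thetas t i \<theta>) / real n"
      unfolding t_BCGC_def total_tax_def by (simp add: sum_subtractf sum_divide_distrib)
    also have "(\<Sum>i<n. S_BCGC n Thetas t i \<theta>) \<ge> (\<Sum>i<n. total_tax n t \<theta>)"
      using Sge[OF th] by (intro sum_mono) auto
    hence "(\<Sum>i<n. S_BCGC n Thetas t i \<theta>) / real n \<ge> total_tax n t \<theta>"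
      using assms(1) by (simp add: field_simps)
    finally show "(\<Sum>i<n. snd (f, t_BCGC n Thetas t) i \<theta>) \<le> 0" by simp
  qed
  moreover have "feasible n Thetas (f, t) \<longrightarrow>
           (\<forall>\<theta>\<in>profiles n Thetas. \<forall>i<n. t_BCGC n Thetas t i \<theta> = t i \<theta>)
           \<or> dominates n Thetas (f, t_BCGC n Thetas t) (f, t)"
  proof
    assume F: "feasible n Thetas (f, t)"
    have le: "t i \<theta> \<le> t_BCGC n Thetas t i \<theta>"
      if th: "\<theta> \<in> profiles n Thetas" and i: "i < n" for \<theta> i
    proof -
      have ne: "Thetas i \<noteq> {}" using th i unfolding profiles_def by auto
      have "S_BCGC n Thetas t i \<theta> \<le> 0"
        unfolding S_BCGC_def
      proof (rule cSUP_least[OF ne])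
        fix x assume "x \<in> Thetas i"
        hence "\<theta>(i := x) \<in> profiles n Thetas" using upd_prof[OF th i] by auto
        thus "total_tax n t (\<theta>(i := x)) \<le> 0" using F unfolding feasible_def total_tax_def by auto
      qed
      hence "S_BCGC n Thetas t i \<theta> / real n \<le> 0" by (simp add: divide_nonpos_nonneg)
      thus ?thesis unfolding t_BCGC_def by simp
    qed
    show "(\<forall>\<theta>\<in>profiles n Thetas. \<forall>i<n. t_BCGC n Thetas t i \<theta> = t i \<theta>)
           \<or> dominates n Thetas (f, t_BCGC n Thetas t) (f, t)"
    proof (cases "\<forall>\<theta>\<in>profiles n Thetas. \<forall>i<n. t_BCGC n Thetas t i \<theta> = t i \<theta>")
      case True thus ?thesis by simp
    next
      case False
      then obtain \<theta> i where "\<theta> \<in> profiles n Thetas" "i < n" "t_BCGC n Thetas t i \<theta> \<noteq> t i \<theta>" by auto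
      with le[of \<theta> i] have "t i \<theta> < t_BCGC n Thetas t i \<theta>" by auto
      hence "dominates n Thetas (f, t_BCGC n Thetas t) (f, t)"
        unfolding dominates_def using le \<open>\<theta> \<in> _\<close> \<open>i < n\<close> by auto
      thus ?thesis by simp
    qed
  qed
  ultimately show ?thesis by blast
qed

end
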